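(* Let $T\ge0$ and let $a,k\in\{0,1,2,\dots\}$ with $a<k$. Then for every $b\in\mathbb N_+$ with $a<b\le k$, $$v(k-a-1,T)\le\alpha\,v(k-b,T)+(1-\alpha)\,v(k-a,T),\qquad \alpha=\frac{1}{b-a}.$$
   Context: Let $\lambda>0$ and let $N$ be a Poisson process with intensity $\lambda$, arrival times $0<\sigma_1<\sigma_2<\cdots$, and natural filtration $\mathcal F_t=\sigma(N_s:s\le t)$. Let $F:[0,\infty)\to[0,\infty)$ be strictly increasing and strictly convex with $F(0)=0$. For $k\in\{0,1,\dots\}$ let $\mathcal A_k$ be the set of $(\mathcal F_t)$-adapted, integer-valued, nonnegative, non-increasing processes $\xi$ with $\xi_0=k$ whose values change only at arrival times of $N$, and $v(k,T)=\inf_{\xi\in\mathcal A_k}\mathbb E[\sum_{i:\sigma_i\le T}F(\xi_{\sigma_i-}-\xi_{\sigma_i})+F(\xi_T)]$ (so $v(0,T)=0$). *)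

theory Defs
  imports "HOL-Probability.Probability"
begin

definition poisson_process :: "'a measure \<Rightarrow> real \<Rightarrow> (real \<Rightarrow> 'a \<Rightarrow> nat) \<Rightarrow> bool" where
  "poisson_process M lam N \<longleftrightarrow>
     prob_space M \<and> 0 < lam \<and>
     (\<forall>t\<ge>0. N t \<in> measurable M (count_space UNIV)) \<and>
     (\<forall>\<omega>\<in>space M. N 0 \<omega> = 0
        \<and> (\<forall>s t. 0 \<le> s \<longrightarrow> s \<le> t \<longrightarrow> N s \<omega> \<le> N t \<omega>)
        \<and> (\<forall>t\<ge>0. \<exists>e>0. \<forall>s. t \<le> s \<longrightarrow> s < t + e \<longrightarrow> N s \<omega> = N t \<omega>)
        \<and> (\<forall>t>0. \<exists>e>0. \<forall>s. t - e < s \<longrightarrow> s < t \<longrightarrow> N t \<omega> \<le> N s \<omega> + 1)) \<and>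
     (\<forall>(n::nat) (t::nat \<Rightarrow> real). 0 \<le> t 0 \<longrightarrow> mono t \<longrightarrow>
        prob_space.indep_vars M (\<lambda>_. count_space UNIV) (\<lambda>i \<omega>. N (t (Suc i)) \<omega> - N (t i) \<omega>) {..<n}) \<and>
     (\<forall>s t. 0 \<le> s \<longrightarrow> s < t \<longrightarrow>
        distr M (count_space UNIV) (\<lambda>\<omega>. N t \<omega> - N s \<omega>) = measure_pmf (poisson_pmf (lam * (t - s))))"

definition arrival :: "(real \<Rightarrow> 'a \<Rightarrow> nat) \<Rightarrow> nat \<Rightarrow> 'a \<Rightarrow> real" where
  "arrival N i \<omega> = Inf {t. 0 \<le> t \<and> i \<le> N t \<omega>}"

definition nat_filt :: "'a measure \<Rightarrow> (real \<Rightarrow> 'a \<Rightarrow> nat) \<Rightarrow> real \<Rightarrow> 'a measure" where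
  "nat_filt M N t = sigma (space M) {N s -` A \<inter> space M | s A. 0 \<le> s \<and> s \<le> t}"

definition admissible :: "'a measure \<Rightarrow> (real \<Rightarrow> 'a \<Rightarrow> nat) \<Rightarrow> nat \<Rightarrow> (real \<Rightarrow> 'a \<Rightarrow> nat) set" where
  "admissible M N k = {\<xi>.
     (\<forall>t\<ge>0. \<xi> t \<in> measurable (nat_filt M N t) (count_space UNIV)) \<and>
     (\<forall>\<omega>\<in>space M. \<xi> 0 \<omega> = k) \<and>
     (\<forall>\<omega>\<in>space M. \<forall>s t. 0 \<le> s \<longrightarrow> s \<le> t \<longrightarrow> \<xi> t \<omega> \<le> \<xi> s \<omega>) \<and>
     (\<forall>\<omega>\<in>space M. \<forall>s t. 0 \<le> s \<longrightarrow> s \<le> t \<longrightarrow> N s \<omega> = N t \<omega> \<longrightarrow> \<xi> s \<omega> = \<xi> t \<omega>)}"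

definition cost :: "(real \<Rightarrow> real) \<Rightarrow> (real \<Rightarrow> 'a \<Rightarrow> nat) \<Rightarrow> real \<Rightarrow> (real \<Rightarrow> 'a \<Rightarrow> nat) \<Rightarrow> 'a \<Rightarrow> real" where
  "cost F N T \<xi> \<omega> =
     (\<Sum>i\<in>{i. 1 \<le> i \<and> arrival N i \<omega> \<le> T}.
        F (Lim (at_left (arrival N i \<omega>)) (\<lambda>s. real (\<xi> s \<omega>)) - real (\<xi> (arrival N i \<omega>) \<omega>)))
     + F (real (\<xi> T \<omega>))"

definition value_fn :: "'a measure \<Rightarrow> (real \<Rightarrow> 'a \<Rightarrow> nat) \<Rightarrow> (real \<Rightarrow> real) \<Rightarrow> nat \<Rightarrow> real \<Rightarrow> ennreal" where
  "value_fn M N F k T = (INF \<xi>\<in>admissible M N k. \<integral>\<^sup>+ \<omega>. ennreal (cost F N T \<xi> \<omega>) \<partial>M)"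

definition strictly_convex_on :: "real set \<Rightarrow> (real \<Rightarrow> real) \<Rightarrow> bool" where
  "strictly_convex_on S f \<longleftrightarrow> convex S \<and> (\<forall>x\<in>S. \<forall>y\<in>S. x \<noteq> y \<longrightarrow>
     (\<forall>u::real. 0 < u \<longrightarrow> u < 1 \<longrightarrow> f (u * x + (1 - u) * y) < u * f x + (1 - u) * f y))"

end

theory Submission
  imports Defs
begin

definition goodpath :: "(real \<Rightarrow> 'a \<Rightarrow> nat) \<Rightarrow> 'a \<Rightarrow> bool" where
  "goodpath N \<omega> \<longleftrightarrow> N 0 \<omega> = 0
        \<and> (\<forall>s t. 0 \<le> s \<longrightarrow> s \<le> t \<longrightarrow> N s \<omega> \<le> N t \<omega>)
        \<and> (\<forall>t\<ge>0. \<exists>e>0. \<forall>s. t \<le> s \<longrightarrow> s < t + e \<longrightarrow> N s \<omega> = N t \<omega>)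
        \<and> (\<forall>t>0. \<exists>e>0. \<forall>s. t - e < s \<longrightarrow> s < t \<longrightarrow> N t \<omega> \<le> N s \<omega> + 1)
        \<and> (\<forall>i. \<exists>n::nat. i \<le> N (real n) \<omega>)"

context
  fixes N :: "real \<Rightarrow> 'a \<Rightarrow> nat" and \<omega> :: 'a
  assumes gp: "goodpath N \<omega>"
begin

lemma gp_N0: "N 0 \<omega> = 0" using gp by (simp add: goodpath_def)
lemma gp_mono: "0 \<le> s \<Longrightarrow> s \<le> t \<Longrightarrow> N s \<omega> \<le> N t \<omega>" using gp by (simp add: goodpath_def)
lemma gp_rc: "0 \<le> t \<Longrightarrow> \<exists>e>0. \<forall>s. t \<le> s \<longrightarrow> s < t + e \<longrightarrow> N s \<omega> = N t \<omega>" using gp by (simp add: goodpath_def)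
lemma gp_lc: "0 < t \<Longrightarrow> \<exists>e>0. \<forall>s. t - e < s \<longrightarrow> s < t \<longrightarrow> N t \<omega> \<le> N s \<omega> + 1" using gp by (simp add: goodpath_def)
lemma gp_unb: "\<exists>n::nat. i \<le> N (real n) \<omega>" using gp by (simp add: goodpath_def)

lemma arr_ne: "{t. 0 \<le> t \<and> i \<le> N t \<omega>} \<noteq> {}"
proof -
  obtain n :: nat where "i \<le> N (real n) \<omega>" using gp_unb[of i] by blast
  then have "real n \<in> {t. 0 \<le> t \<and> i \<le> N t \<omega>}" by simp
  then show ?thesis by blast
qed

lemma arr_bdd: "bdd_below {t. 0 \<le> t \<and> i \<le> N t \<omega>}"
  by (rule bdd_belowI[of _ 0]) auto

lemma arr_nonneg: "0 \<le> arrival N i \<omega>"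
  unfolding arrival_def by (rule cInf_greatest[OF arr_ne]) auto

lemma arr_le: "0 \<le> t \<Longrightarrow> i \<le> N t \<omega> \<Longrightarrow> arrival N i \<omega> \<le> t"
  unfolding arrival_def by (rule cInf_lower[OF _ arr_bdd]) auto

lemma arr_ge: "0 \<le> t \<Longrightarrow> t < arrival N i \<omega> \<Longrightarrow> N t \<omega> < i"
  using arr_le[of t i] by linarith

lemma arr_N_ge: "i \<le> N (arrival N i \<omega>) \<omega>"
proof (rule ccontr)
  let ?s = "arrival N i \<omega>"
  assume a: "\<not> i \<le> N ?s \<omega>"
  obtain e where e: "e > 0" "\<forall>s. ?s \<le> s \<longrightarrow> s < ?s + e \<longrightarrow> N s \<omega> = N ?s \<omega>"
    using gp_rc[OF arr_nonneg] by blast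
  have "Inf {t. 0 \<le> t \<and> i \<le> N t \<omega>} < ?s + e" using e(1) by (simp add: arrival_def)
  then obtain t where t: "0 \<le> t" "i \<le> N t \<omega>" "t < ?s + e"
    using cInf_lessD[OF arr_ne] by blast
  have "?s \<le> t" using arr_le t by blast
  then have "N t \<omega> = N ?s \<omega>" using e(2) t(3) by blast
  then show False using a t(2) by simp
qed

lemma arr0: "arrival N 0 \<omega> = 0"
  using arr_le[of 0 0] arr_nonneg[of 0] by simp

lemma arr_pos: "1 \<le> i \<Longrightarrow> 0 < arrival N i \<omega>"
proof (rule ccontr)
  assume "1 \<le> i" "\<not> 0 < arrival N i \<omega>"
  then have "arrival N i \<omega> = 0" using arr_nonneg[of i] by linarith
  then show False using arr_N_ge[of i] gp_N0 \<open>1 \<le> i\<close> by simp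
qed

lemma arr_N_le: "N (arrival N i \<omega>) \<omega> \<le> i"
proof (cases "i = 0")
  case True then show ?thesis using arr0 gp_N0 by simp
next
  case False
  let ?s = "arrival N i \<omega>"
  have sp: "0 < ?s" using arr_pos False by simp
  obtain e where e: "e > 0" "\<forall>s. ?s - e < s \<longrightarrow> s < ?s \<longrightarrow> N ?s \<omega> \<le> N s \<omega> + 1"
    using gp_lc[OF sp] by blast
  define s where "s = ?s - min e ?s / 2"
  have "?s - e < s" "s < ?s" "0 \<le> s" using e(1) sp by (auto simp: s_def min_def)
  then have "N ?s \<omega> \<le> N s \<omega> + 1" "N s \<omega> < i" using e(2) arr_ge by auto
  then show ?thesis by simp
qed

lemma arr_N: "N (arrival N i \<omega>) \<omega> = i"
  using arr_N_le arr_N_ge by (simp add: antisym)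

lemma arr_mono_le: "i \<le> j \<Longrightarrow> arrival N i \<omega> \<le> arrival N j \<omega>"
  using arr_le[OF arr_nonneg[of j], of i] arr_N_ge[of j] by simp

lemma arr_strict: "arrival N i \<omega> < arrival N (Suc i) \<omega>"
proof -
  have "arrival N i \<omega> \<le> arrival N (Suc i) \<omega>" by (rule arr_mono_le) simp
  moreover have "arrival N i \<omega> \<noteq> arrival N (Suc i) \<omega>"
    using arr_N[of i] arr_N[of "Suc i"] by auto
  ultimately show ?thesis by simp
qed

lemma N_between: assumes "arrival N i \<omega> \<le> t" "t < arrival N (Suc i) \<omega>" shows "N t \<omega> = i"
proof -
  have "0 \<le> t" using arr_nonneg[of i] assms by linarith
  have "i \<le> N t \<omega>" using gp_mono[OF arr_nonneg[of i] assms(1)] arr_N[of i] by simp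
  moreover have "N t \<omega> < Suc i" using arr_ge[OF \<open>0 \<le> t\<close> assms(2)] .
  ultimately show ?thesis by simp
qed

lemma arr_le_T: "0 \<le> T \<Longrightarrow> arrival N i \<omega> \<le> T \<longleftrightarrow> i \<le> N T \<omega>"
  using arr_le[of T i] gp_mono[OF arr_nonneg[of i], of T] arr_N[of i] by auto

end

context
  fixes N :: "real \<Rightarrow> 'a \<Rightarrow> nat" and \<omega> :: 'a and \<xi> :: "real \<Rightarrow> 'a \<Rightarrow> nat"
    and M :: "'a measure" and k :: nat
  assumes gp: "goodpath N \<omega>" and adm: "\<xi> \<in> admissible M N k" and om: "\<omega> \<in> space M"
begin

lemma xi0: "\<xi> 0 \<omega> = k" using adm om by (simp add: admissible_def)
lemma xi_mono: "0 \<le> s \<Longrightarrow> s \<le> t \<Longrightarrow> \<xi> t \<omega> \<le> \<xi> s \<omega>"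
  using adm om by (simp add: admissible_def)
lemma xi_cst: "0 \<le> s \<Longrightarrow> s \<le> t \<Longrightarrow> N s \<omega> = N t \<omega> \<Longrightarrow> \<xi> s \<omega> = \<xi> t \<omega>"
  using adm om by (simp add: admissible_def)
lemma xi_le_k: "0 \<le> t \<Longrightarrow> \<xi> t \<omega> \<le> k" using xi_mono[of 0 t] xi0 by simp

lemma xi_between: assumes "arrival N i \<omega> \<le> t" "t < arrival N (Suc i) \<omega>"
  shows "\<xi> t \<omega> = \<xi> (arrival N i \<omega>) \<omega>"
proof -
  have "N t \<omega> = i" using N_between[OF gp assms] .
  moreover have "N (arrival N i \<omega>) \<omega> = i" using arr_N[OF gp] .
  ultimately show ?thesis using xi_cst[OF arr_nonneg[OF gp] assms(1)] by simp
qed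

lemma xi_arr_mono: "i \<le> j \<Longrightarrow> \<xi> (arrival N j \<omega>) \<omega> \<le> \<xi> (arrival N i \<omega>) \<omega>"
  using xi_mono[OF arr_nonneg[OF gp] arr_mono_le[OF gp]] by blast

lemma xi_left_lim: assumes "1 \<le> i"
  shows "Lim (at_left (arrival N i \<omega>)) (\<lambda>s. real (\<xi> s \<omega>)) = real (\<xi> (arrival N (i - 1) \<omega>) \<omega>)"
proof (rule tendsto_Lim)
  show "\<not> trivial_limit (at_left (arrival N i \<omega>))" by simp
  have i: "Suc (i - 1) = i" using assms by simp
  have lt: "arrival N (i - 1) \<omega> < arrival N i \<omega>" using arr_strict[OF gp, of "i - 1"] i by simp
  have "eventually (\<lambda>s. s \<in> {arrival N (i - 1) \<omega><..<arrival N i \<omega>}) (at_left (arrival N i \<omega>))"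
    by (rule eventually_at_left_real[OF lt])
  then have "eventually (\<lambda>s. real (\<xi> s \<omega>) = real (\<xi> (arrival N (i - 1) \<omega>) \<omega>)) (at_left (arrival N i \<omega>))"
  proof (rule eventually_mono)
    fix s assume s: "s \<in> {arrival N (i - 1) \<omega><..<arrival N i \<omega>}"
    then have "arrival N (i - 1) \<omega> \<le> s" "s < arrival N (Suc (i - 1)) \<omega>" using i by auto
    then have "\<xi> s \<omega> = \<xi> (arrival N (i - 1) \<omega>) \<omega>" by (rule xi_between)
    then show "real (\<xi> s \<omega>) = real (\<xi> (arrival N (i - 1) \<omega>) \<omega>)" by simp
  qed
  then show "((\<lambda>s. real (\<xi> s \<omega>)) \<longlongrightarrow> real (\<xi> (arrival N (i - 1) \<omega>) \<omega>)) (at_left (arrival N i \<omega>))"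
    by (rule tendsto_eventually)
qed

lemma cost_formula: assumes T: "0 \<le> T"
  shows "cost F N T \<xi> \<omega> = (\<Sum>i\<in>{1..N T \<omega>}. F (real (\<xi> (arrival N (i - 1) \<omega>) \<omega> - \<xi> (arrival N i \<omega>) \<omega>)))
          + F (real (\<xi> T \<omega>))"
proof -
  have S: "{i. 1 \<le> i \<and> arrival N i \<omega> \<le> T} = {1..N T \<omega>}" proof (intro set_eqI iffI)
    fix i assume "i \<in> {i. 1 \<le> i \<and> arrival N i \<omega> \<le> T}"
    then show "i \<in> {1..N T \<omega>}" using arr_le_T[OF gp T, of i] by simp
  next
    fix i assume "i \<in> {1..N T \<omega>}"
    then show "i \<in> {i. 1 \<le> i \<and> arrival N i \<omega> \<le> T}" using arr_le_T[OF gp T, of i] by simp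
  qed
  show ?thesis unfolding cost_def S
  proof (intro arg_cong2[where f="(+)"] refl sum.cong)
    fix i assume "i \<in> {1..N T \<omega>}"
    then have i: "1 \<le> i" by simp
    have le: "\<xi> (arrival N i \<omega>) \<omega> \<le> \<xi> (arrival N (i - 1) \<omega>) \<omega>" by (rule xi_arr_mono) simp
    show "F (Lim (at_left (arrival N i \<omega>)) (\<lambda>s. real (\<xi> s \<omega>)) - real (\<xi> (arrival N i \<omega>) \<omega>)) =
          F (real (\<xi> (arrival N (i - 1) \<omega>) \<omega> - \<xi> (arrival N i \<omega>) \<omega>))"
      by (simp only: xi_left_lim[OF i] of_nat_diff[OF le])
  qed
qed

end

lemma conv_pair:
  fixes F :: "real \<Rightarrow> real"
  assumes sc: "strictly_convex_on {0..} F" and p: "0 \<le> p" "p \<le> u" "u \<le> q" and w: "w = p + q - u"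
  shows "F u + F w \<le> F p + F q"
proof (cases "u = p \<or> u = q")
  case True then show ?thesis using w by auto
next
  case False
  then have pq: "p < u" "u < q" using p by auto
  define l where "l = (q - u) / (q - p)"
  have l: "0 < l" "l < 1" using pq by (auto simp: l_def field_simps)
  have h: "l * (q - p) = q - u" using pq by (simp add: l_def)
  have h1: "(1 - l) * q = q - l * q" "(1 - l) * p = p - l * p" "l * (q - p) = l * q - l * p"
    by (simp_all add: algebra_simps)
  have u: "u = l * p + (1 - l) * q" using h h1 by linarith
  have w2: "w = (1 - l) * p + (1 - (1 - l)) * q" using h h1 w by simp
  have ne: "p \<noteq> q" using pq by simp
  have P: "p \<in> {0..}" "q \<in> {0..}" using p by auto
  have c1: "F (l * p + (1 - l) * q) < l * F p + (1 - l) * F q"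
    using sc P ne l unfolding strictly_convex_on_def by blast
  have c2: "F ((1 - l) * p + (1 - (1 - l)) * q) < (1 - l) * F p + (1 - (1 - l)) * F q"
  proof -
    have "0 < 1 - l" "1 - l < 1" using l by auto
    then show ?thesis using sc P ne unfolding strictly_convex_on_def by blast
  qed
  have "F u < l * F p + (1 - l) * F q" using c1 by (simp only: u[symmetric])
  moreover have "F w < (1 - l) * F p + (1 - (1 - l)) * F q" using c2 by (simp only: w2[symmetric])
  ultimately show ?thesis by (simp add: algebra_simps)
qed

lemma split_ineq:
  fixes F :: "real \<Rightarrow> real" and x x' y y' :: nat
  assumes sc: "strictly_convex_on {0..} F" and le: "x' \<le> x" "y' \<le> y"
  shows "F (real ((x + y + 1) div 2 - (x' + y' + 1) div 2)) + F (real ((x + y) div 2 - (x' + y') div 2))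
         \<le> F (real (x - x')) + F (real (y - y'))"
proof -
  define u1 where "u1 = (x + y + 1) div 2 - (x' + y' + 1) div 2"
  define u2 where "u2 = (x + y) div 2 - (x' + y') div 2"
  have d: "\<And>n::nat. (n + 1) div 2 + n div 2 = n" "\<And>n::nat. (n + 1) div 2 \<le> n div 2 + 1"
    "\<And>n::nat. n div 2 \<le> (n + 1) div 2" by presburger+
  have m: "(x' + y' + 1) div 2 \<le> (x + y + 1) div 2" "(x' + y') div 2 \<le> (x + y) div 2"
    using le by (simp_all add: div_le_mono)
  have A: "u1 + u2 = (x - x') + (y - y')" "u1 \<le> u2 + 1" "u2 \<le> u1 + 1"
    using le m d[of "x + y"] d[of "x' + y'"] unfolding u1_def u2_def by linarith+
  define p where "p = min (x - x') (y - y')"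
  define q where "q = max (x - x') (y - y')"
  have pq: "p + q = (x - x') + (y - y')" by (simp add: p_def q_def)
  have B: "p \<le> u1" "u1 \<le> q" using A pq p_def q_def by linarith+
  have "F (real u1) + F (real u2) \<le> F (real p) + F (real q)"
  proof (rule conv_pair[OF sc])
    show "0 \<le> real p" "real p \<le> real u1" "real u1 \<le> real q" using B by auto
    show "real u2 = real p + real q - real u1" using A pq by linarith
  qed
  moreover have "F (real p) + F (real q) = F (real (x - x')) + F (real (y - y'))"
    by (cases "x - x' \<le> y - y'") (auto simp: p_def q_def min_def max_def)
  ultimately show ?thesis unfolding u1_def u2_def by simp
qed

lemma pp_meas: "poisson_process M lam N \<Longrightarrow> 0 \<le> t \<Longrightarrow> N t \<in> M \<rightarrow>\<^sub>M count_space UNIV"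
  by (simp add: poisson_process_def)

lemma nat_filt_subalg:
  assumes pp: "poisson_process M lam N"
  shows "subalgebra M (nat_filt M N t)"
proof -
  let ?C = "{N s -` A \<inter> space M | s A. 0 \<le> s \<and> s \<le> t}"
  have C: "?C \<subseteq> Pow (space M)" by auto
  have C2: "?C \<subseteq> sets M"
  proof
    fix X assume "X \<in> ?C"
    then obtain s A where X: "X = N s -` A \<inter> space M" "0 \<le> s" by blast
    show "X \<in> sets M" unfolding X(1) using measurable_sets[OF pp_meas[OF pp X(2)], of A] by simp
  qed
  have "sets (nat_filt M N t) = sigma_sets (space M) ?C"
    unfolding nat_filt_def using C by (rule sets_measure_of)
  moreover have "space (nat_filt M N t) = space M"
    unfolding nat_filt_def using C by (rule space_measure_of)
  ultimately show ?thesis unfolding subalgebra_def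
    using sets.sigma_sets_subset[OF C2] by simp
qed

lemma adm_meas:
  assumes pp: "poisson_process M lam N" and adm: "\<xi> \<in> admissible M N k" and t: "0 \<le> t"
  shows "\<xi> t \<in> M \<rightarrow>\<^sub>M count_space UNIV"
  using adm t by (intro measurable_from_subalg[OF nat_filt_subalg[OF pp, of t]]) (simp add: admissible_def)

lemma meas2:
  fixes f g :: "'a \<Rightarrow> nat"
  assumes f: "f \<in> M \<rightarrow>\<^sub>M count_space UNIV" and g: "g \<in> M \<rightarrow>\<^sub>M count_space UNIV"
    and that: "\<And>a b. \<phi> a b \<in> space K"
  shows "(\<lambda>x. \<phi> (f x) (g x)) \<in> M \<rightarrow>\<^sub>M K"
proof -
  have h: "(\<lambda>x. \<phi> a (g x)) \<in> M \<rightarrow>\<^sub>M K" for a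
    apply (rule measurable_compose_countable'[where f="\<lambda>b x. \<phi> a b", OF _ g])
     apply (rule measurable_const, rule that)
    apply simp
    done
  show ?thesis
    apply (rule measurable_compose_countable'[where f="\<lambda>a x. \<phi> a (g x)", OF h f])
    apply simp
    done
qed

lemma meas_card:
  fixes P :: "nat \<Rightarrow> 'a \<Rightarrow> bool"
  assumes S: "finite S" and P: "\<And>n. {\<omega>\<in>space M. P n \<omega>} \<in> sets M"
  shows "(\<lambda>\<omega>. card {n\<in>S. P n \<omega>}) \<in> M \<rightarrow>\<^sub>M count_space UNIV"
  using S
proof (induction S rule: finite_induct)
  case empty then show ?case by simp
next
  case (insert a S)
  have eq: "(\<lambda>\<omega>. card {n\<in>insert a S. P n \<omega>}) = (\<lambda>\<omega>. (if P a \<omega> then 1 else 0) + card {n\<in>S. P n \<omega>})"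
  proof
    fix \<omega>
    show "card {n\<in>insert a S. P n \<omega>} = (if P a \<omega> then 1 else 0) + card {n\<in>S. P n \<omega>}"
    proof (cases "P a \<omega>")
      case True
      then have "{n\<in>insert a S. P n \<omega>} = insert a {n\<in>S. P n \<omega>}" by blast
      moreover have "finite {n\<in>S. P n \<omega>}" "a \<notin> {n\<in>S. P n \<omega>}" using insert.hyps by auto
      ultimately show ?thesis using True by simp
    next
      case False
      then have "{n\<in>insert a S. P n \<omega>} = {n\<in>S. P n \<omega>}" by blast
      then show ?thesis using False by simp
    qed
  qed
  have i: "(\<lambda>\<omega>. if P a \<omega> then 1 else (0::nat)) \<in> M \<rightarrow>\<^sub>M count_space UNIV"
    by (rule measurable_If) (auto intro: P)
  show ?case unfolding eq by (rule meas2[OF i insert.IH, where \<phi>="(+)"]) simp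
qed

definition gv :: "(real \<Rightarrow> 'a \<Rightarrow> nat) \<Rightarrow> (real \<Rightarrow> 'a \<Rightarrow> nat) \<Rightarrow> nat \<Rightarrow> nat \<Rightarrow> 'a \<Rightarrow> nat" where
  "gv N \<xi> k i \<omega> = card {n\<in>{1..k}. \<exists>q\<in>\<rat>. 0 \<le> q \<and> i \<le> N q \<omega> \<and> n \<le> \<xi> q \<omega>}"

lemma gv_eq:
  assumes gp: "goodpath N \<omega>" and adm: "\<xi> \<in> admissible M N k" and om: "\<omega> \<in> space M"
  shows "gv N \<xi> k i \<omega> = \<xi> (arrival N i \<omega>) \<omega>"
proof -
  let ?x = "\<xi> (arrival N i \<omega>) \<omega>"
  have xk: "?x \<le> k" using xi_le_k[OF gp adm om arr_nonneg[OF gp]] .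
  have "{n\<in>{1..k}. \<exists>q\<in>\<rat>. 0 \<le> q \<and> i \<le> N q \<omega> \<and> n \<le> \<xi> q \<omega>} = {1..?x}"
  proof (intro set_eqI iffI)
    fix n assume "n \<in> {n\<in>{1..k}. \<exists>q\<in>\<rat>. 0 \<le> q \<and> i \<le> N q \<omega> \<and> n \<le> \<xi> q \<omega>}"
    then obtain q where q: "1 \<le> n" "0 \<le> q" "i \<le> N q \<omega>" "n \<le> \<xi> q \<omega>" by auto
    have "arrival N i \<omega> \<le> q" using arr_le[OF gp q(2,3)] .
    then have "\<xi> q \<omega> \<le> ?x" using xi_mono[OF gp adm om arr_nonneg[OF gp]] by blast
    then show "n \<in> {1..?x}" using q by simp
  next
    fix n assume n: "n \<in> {1..?x}"
    obtain q where q: "q \<in> \<rat>" "arrival N i \<omega> < q" "q < arrival N (Suc i) \<omega>"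
      using Rats_dense_in_real[OF arr_strict[OF gp, of i]] by blast
    have q0: "0 \<le> q" using arr_nonneg[OF gp, of i] q(2) by linarith
    have "N q \<omega> = i" using N_between[OF gp _ q(3)] q(2) by simp
    moreover have "\<xi> q \<omega> = ?x" using xi_between[OF gp adm om _ q(3)] q(2) by simp
    ultimately show "n \<in> {n\<in>{1..k}. \<exists>q\<in>\<rat>. 0 \<le> q \<and> i \<le> N q \<omega> \<and> n \<le> \<xi> q \<omega>}"
      using n xk q(1) q0 by auto
  qed
  then show ?thesis unfolding gv_def by simp
qed

lemma gv_meas:
  assumes pp: "poisson_process M lam N" and adm: "\<xi> \<in> admissible M N k"
  shows "gv N \<xi> k i \<in> M \<rightarrow>\<^sub>M count_space UNIV"
  unfolding gv_def
proof (rule meas_card)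
  fix n
  have eq: "{\<omega>\<in>space M. \<exists>q\<in>\<rat>. 0 \<le> q \<and> i \<le> N q \<omega> \<and> n \<le> \<xi> q \<omega>}
      = (\<Union>q\<in>\<rat> \<inter> {0..}. (N q -` {i..} \<inter> space M) \<inter> (\<xi> q -` {n..} \<inter> space M))"
    by auto
  show "{\<omega>\<in>space M. \<exists>q\<in>\<rat>. 0 \<le> q \<and> i \<le> N q \<omega> \<and> n \<le> \<xi> q \<omega>} \<in> sets M"
    unfolding eq
  proof (rule sets.countable_UN'')
    show "countable (\<rat> \<inter> {0..})" using countable_rat by (rule countable_subset[rotated]) auto
    fix q :: real assume "q \<in> \<rat> \<inter> {0..}"
    then have q: "0 \<le> q" by simp
    show "(N q -` {i..} \<inter> space M) \<inter> (\<xi> q -` {n..} \<inter> space M) \<in> sets M"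
      using measurable_sets[OF pp_meas[OF pp q], of "{i..}"] measurable_sets[OF adm_meas[OF pp adm q], of "{n..}"]
      by (rule sets.Int) simp_all
  qed
qed simp

definition hc :: "(real \<Rightarrow> real) \<Rightarrow> (real \<Rightarrow> 'a \<Rightarrow> nat) \<Rightarrow> real \<Rightarrow> (real \<Rightarrow> 'a \<Rightarrow> nat) \<Rightarrow> nat \<Rightarrow> 'a \<Rightarrow> ennreal" where
  "hc F N T \<xi> k \<omega> = ennreal ((\<Sum>i\<in>{1..N T \<omega>}. F (real (gv N \<xi> k (i - 1) \<omega> - gv N \<xi> k i \<omega>))) + F (real (\<xi> T \<omega>)))"

lemma hc_meas:
  assumes pp: "poisson_process M lam N" and adm: "\<xi> \<in> admissible M N k" and T: "0 \<le> T"
  shows "hc F N T \<xi> k \<in> borel_measurable M"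
proof -
  have t: "(\<lambda>\<omega>. F (real (gv N \<xi> k (i - 1) \<omega> - gv N \<xi> k i \<omega>))) \<in> borel_measurable M" for i
    by (rule meas2[OF gv_meas[OF pp adm] gv_meas[OF pp adm], where \<phi>="\<lambda>a b. F (real (a - b))"]) simp
  have x: "(\<lambda>\<omega>. F (real (\<xi> T \<omega>))) \<in> borel_measurable M"
    by (rule meas2[OF adm_meas[OF pp adm T] adm_meas[OF pp adm T], where \<phi>="\<lambda>a b. F (real a)"]) simp
  have f: "(\<lambda>\<omega>. ennreal ((\<Sum>i\<in>{1..n}. F (real (gv N \<xi> k (i - 1) \<omega> - gv N \<xi> k i \<omega>))) + F (real (\<xi> T \<omega>))))
      \<in> borel_measurable M" for n
    by (intro measurable_compose[OF _ measurable_ennreal] borel_measurable_add borel_measurable_sum t x)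
  show ?thesis unfolding hc_def
    by (rule measurable_compose_countable'[where f="\<lambda>n \<omega>. ennreal ((\<Sum>i\<in>{1..n}. F (real (gv N \<xi> k (i - 1) \<omega> - gv N \<xi> k i \<omega>))) + F (real (\<xi> T \<omega>)))", OF f pp_meas[OF pp T]]) simp
qed

lemma cost_hc:
  assumes gp: "goodpath N \<omega>" and adm: "\<xi> \<in> admissible M N k" and om: "\<omega> \<in> space M" and T: "0 \<le> T"
  shows "ennreal (cost F N T \<xi> \<omega>) = hc F N T \<xi> k \<omega>"
  unfolding hc_def cost_formula[OF gp adm om T] gv_eq[OF gp adm om] ..

lemma poisson_tail_lim:
  fixes lam :: real and i :: nat
  assumes lam: "0 < lam"
  shows "(\<lambda>n::nat. \<Sum>j<i. (lam * real n) ^ j / fact j * exp (- (lam * real n))) \<longlonglongrightarrow> 0"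
proof -
  have lim: "filterlim (\<lambda>n::nat. lam * real n) at_top sequentially"
    by (rule filterlim_tendsto_pos_mult_at_top[OF tendsto_const lam filterlim_real_sequentially])
  have t: "(\<lambda>n::nat. (lam * real n) ^ j / fact j * exp (- (lam * real n))) \<longlonglongrightarrow> 0" for j
  proof -
    have "(\<lambda>n::nat. (lam * real n) ^ j / exp (lam * real n)) \<longlonglongrightarrow> 0"
      using filterlim_compose[OF tendsto_power_div_exp_0 lim] by simp
    then have "(\<lambda>n::nat. (1 / fact j) * ((lam * real n) ^ j / exp (lam * real n))) \<longlonglongrightarrow> (1 / fact j) * 0"
      by (rule tendsto_mult_left)
    moreover have "(\<lambda>n::nat. (1 / fact j) * ((lam * real n) ^ j / exp (lam * real n)))
        = (\<lambda>n::nat. (lam * real n) ^ j / fact j * exp (- (lam * real n)))"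
      by (simp add: exp_minus field_simps)
    ultimately show ?thesis by simp
  qed
  have "(\<lambda>n::nat. \<Sum>j<i. (lam * real n) ^ j / fact j * exp (- (lam * real n))) \<longlonglongrightarrow> (\<Sum>j<i. 0)"
    by (rule tendsto_sum) (rule t)
  then show ?thesis by simp
qed

lemma AE_good:
  assumes pp: "poisson_process M lam N"
  shows "AE \<omega> in M. goodpath N \<omega>"
proof -
  interpret prob_space M using pp by (simp add: poisson_process_def)
  have lam: "0 < lam" using pp by (simp add: poisson_process_def)
  have unb: "AE \<omega> in M. \<exists>n::nat. i \<le> N (real n) \<omega>" for i
  proof -
    have Sn: "{\<omega>\<in>space M. N (real n) \<omega> < i} \<in> sets M" for n :: nat
    proof -
      have "{\<omega>\<in>space M. N (real n) \<omega> < i} = N (real n) -` {..<i} \<inter> space M" by auto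
      then show ?thesis using measurable_sets[OF pp_meas[OF pp], of "real n" "{..<i}"] by simp
    qed
    define B where "B = {\<omega>\<in>space M. \<forall>n::nat. N (real n) \<omega> < i}"
    have Bs: "B \<in> sets M" unfolding B_def by (rule sets.sets_Collect_countable_All) (rule Sn)
    have bound: "prob B \<le> (\<Sum>j<i. (lam * real n) ^ j / fact j * exp (- (lam * real n)))" if n: "1 \<le> n" for n :: nat
    proof -
      have "prob B \<le> prob {\<omega>\<in>space M. N (real n) \<omega> < i}"
        by (rule finite_measure_mono) (auto simp: B_def Sn)
      also have "\<dots> = measure (distr M (count_space UNIV) (\<lambda>\<omega>. N (real n) \<omega> - N 0 \<omega>)) {..<i}"
      proof -
        have m: "(\<lambda>\<omega>. N (real n) \<omega> - N 0 \<omega>) \<in> M \<rightarrow>\<^sub>M count_space UNIV"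
          by (rule meas2[OF pp_meas[OF pp] pp_meas[OF pp], where \<phi>="(-)"]) simp_all
        have "(\<lambda>\<omega>. N (real n) \<omega> - N 0 \<omega>) -` {..<i} \<inter> space M = {\<omega>\<in>space M. N (real n) \<omega> < i}"
          using pp by (auto simp: poisson_process_def)
        then show ?thesis using measure_distr[OF m, of "{..<i}"] by simp
      qed
      also have "\<dots> = measure (measure_pmf (poisson_pmf (lam * (real n - 0)))) {..<i}"
        using pp n by (simp add: poisson_process_def)
      also have "\<dots> = (\<Sum>j<i. (lam * real n) ^ j / fact j * exp (- (lam * real n)))"
      proof -
        have "0 < lam * real n" using lam n by simp
        then show ?thesis by (simp add: measure_measure_pmf_finite)
      qed
      finally show ?thesis .
    qed
    have "prob B \<le> 0"
      by (rule LIMSEQ_le_const[OF poisson_tail_lim[OF lam, of i]]) (use bound in blast)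
    then have "prob B = 0" using measure_nonneg[of M B] by linarith
    then have "B \<in> null_sets M" using Bs by (simp add: emeasure_eq_measure null_sets_def)
    then show ?thesis
      by (rule AE_I') (auto simp: B_def not_le)
  qed
  then have "AE \<omega> in M. \<forall>i. \<exists>n::nat. i \<le> N (real n) \<omega>" by (simp add: AE_all_countable)
  with AE_space show ?thesis
  proof eventually_elim
    case (elim \<omega>)
    then show "goodpath N \<omega>" using pp unfolding goodpath_def poisson_process_def by blast
  qed
qed

definition comb :: "nat \<Rightarrow> (real \<Rightarrow> 'a \<Rightarrow> nat) \<Rightarrow> (real \<Rightarrow> 'a \<Rightarrow> nat) \<Rightarrow> real \<Rightarrow> 'a \<Rightarrow> nat" where
  "comb c \<xi> \<eta> t \<omega> = (\<xi> t \<omega> + \<eta> t \<omega> + c) div 2"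

lemma comb_adm:
  assumes xi: "\<xi> \<in> admissible M N (Suc (Suc j))" and eta: "\<eta> \<in> admissible M N j" and c: "c \<le> 1"
  shows "comb c \<xi> \<eta> \<in> admissible M N (Suc j)"
proof -
  have m: "comb c \<xi> \<eta> t \<in> nat_filt M N t \<rightarrow>\<^sub>M count_space UNIV" if t: "0 \<le> t" for t
  proof -
    have a: "\<xi> t \<in> nat_filt M N t \<rightarrow>\<^sub>M count_space UNIV" "\<eta> t \<in> nat_filt M N t \<rightarrow>\<^sub>M count_space UNIV"
      using xi eta t by (simp_all add: admissible_def)
    show ?thesis unfolding comb_def
      by (rule meas2[OF a, where \<phi>="\<lambda>a b. (a + b + c) div 2"]) simp
  qed
  have z: "\<xi> 0 \<omega> = Suc (Suc j)" "\<eta> 0 \<omega> = j" if "\<omega> \<in> space M" for \<omega>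
    using xi eta that by (simp_all add: admissible_def)
  have z2: "comb c \<xi> \<eta> 0 \<omega> = Suc j" if "\<omega> \<in> space M" for \<omega>
    using z[OF that] c unfolding comb_def by (cases c) auto
  have mo: "comb c \<xi> \<eta> t \<omega> \<le> comb c \<xi> \<eta> s \<omega>" if "\<omega> \<in> space M" "0 \<le> s" "s \<le> t" for \<omega> s t
  proof -
    have "\<xi> t \<omega> \<le> \<xi> s \<omega>" "\<eta> t \<omega> \<le> \<eta> s \<omega>" using xi eta that by (simp_all add: admissible_def)
    then show ?thesis unfolding comb_def by (intro div_le_mono) simp
  qed
  have cs: "comb c \<xi> \<eta> s \<omega> = comb c \<xi> \<eta> t \<omega>" if "\<omega> \<in> space M" "0 \<le> s" "s \<le> t" "N s \<omega> = N t \<omega>" for \<omega> s t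
  proof -
    have "\<xi> s \<omega> = \<xi> t \<omega>" "\<eta> s \<omega> = \<eta> t \<omega>" using xi eta that by (simp_all add: admissible_def)
    then show ?thesis unfolding comb_def by simp
  qed
  show ?thesis unfolding admissible_def using m z2 mo cs by blast
qed

lemma cost_nonneg:
  assumes gp: "goodpath N \<omega>" and adm: "\<xi> \<in> admissible M N k" and om: "\<omega> \<in> space M" and T: "0 \<le> T"
    and Fnn: "\<forall>x\<ge>0. 0 \<le> F x"
  shows "0 \<le> cost F N T \<xi> \<omega>"
  unfolding cost_formula[OF gp adm om T] using Fnn by (intro add_nonneg_nonneg sum_nonneg) auto

lemma comb_cost:
  assumes gp: "goodpath N \<omega>" and om: "\<omega> \<in> space M" and T: "0 \<le> T"
    and xi: "\<xi> \<in> admissible M N (Suc (Suc j))" and eta: "\<eta> \<in> admissible M N j"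
    and sc: "strictly_convex_on {0..} F"
  shows "cost F N T (comb 1 \<xi> \<eta>) \<omega> + cost F N T (comb 0 \<xi> \<eta>) \<omega> \<le> cost F N T \<xi> \<omega> + cost F N T \<eta> \<omega>"
proof -
  have a1: "comb 1 \<xi> \<eta> \<in> admissible M N (Suc j)" and a0: "comb 0 \<xi> \<eta> \<in> admissible M N (Suc j)"
    using comb_adm[OF xi eta] by auto
  define X where "X i = \<xi> (arrival N i \<omega>) \<omega>" for i
  define Y where "Y i = \<eta> (arrival N i \<omega>) \<omega>" for i
  have XY: "X i \<le> X (i - 1)" "Y i \<le> Y (i - 1)" for i
    unfolding X_def Y_def using xi_arr_mono[OF gp xi om] xi_arr_mono[OF gp eta om] by auto
  have "cost F N T (comb 1 \<xi> \<eta>) \<omega> + cost F N T (comb 0 \<xi> \<eta>) \<omega>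
     = (\<Sum>i\<in>{1..N T \<omega>}. F (real ((X (i - 1) + Y (i - 1) + 1) div 2 - (X i + Y i + 1) div 2))
          + F (real ((X (i - 1) + Y (i - 1)) div 2 - (X i + Y i) div 2)))
       + (F (real ((\<xi> T \<omega> + \<eta> T \<omega> + 1) div 2 - (0 + 0 + 1) div 2)) + F (real ((\<xi> T \<omega> + \<eta> T \<omega>) div 2 - (0 + 0) div 2)))"
    unfolding cost_formula[OF gp a1 om T] cost_formula[OF gp a0 om T] sum.distrib
    by (simp add: comb_def X_def Y_def)
  also have "\<dots> \<le> (\<Sum>i\<in>{1..N T \<omega>}. F (real (X (i - 1) - X i)) + F (real (Y (i - 1) - Y i)))
       + (F (real (\<xi> T \<omega> - 0)) + F (real (\<eta> T \<omega> - 0)))"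
    by (intro add_mono sum_mono split_ineq[OF sc] XY) simp_all
  also have "\<dots> = cost F N T \<xi> \<omega> + cost F N T \<eta> \<omega>"
    unfolding cost_formula[OF gp xi om T] cost_formula[OF gp eta om T] sum.distrib
    by (simp add: X_def Y_def)
  finally show ?thesis .
qed

lemma const_adm: "(\<lambda>t \<omega>. k) \<in> admissible M N k"
  unfolding admissible_def by simp

lemma value_le:
  assumes pp: "poisson_process M lam N" and F0: "F 0 = 0"
  shows "value_fn M N F k T \<le> ennreal (F (real k))"
proof -
  interpret prob_space M using pp by (simp add: poisson_process_def)
  have c: "cost F N T (\<lambda>t \<omega>. k) \<omega> = F (real k)" for \<omega>
  proof -
    have "Lim (at_left x) (\<lambda>s. real k) = real k" for x :: real
      by (rule tendsto_Lim[OF trivial_limit_at_left_real tendsto_const])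
    then show ?thesis unfolding cost_def using F0 by simp
  qed
  have "value_fn M N F k T \<le> (\<integral>\<^sup>+ \<omega>. ennreal (cost F N T (\<lambda>t \<omega>. k) \<omega>) \<partial>M)"
    unfolding value_fn_def by (rule INF_lower[OF const_adm])
  also have "\<dots> = ennreal (F (real k))" unfolding c by (simp add: emeasure_space_1)
  finally show ?thesis .
qed

lemma I_hc:
  assumes pp: "poisson_process M lam N" and adm: "\<xi> \<in> admissible M N k" and T: "0 \<le> T"
  shows "(\<integral>\<^sup>+ \<omega>. ennreal (cost F N T \<xi> \<omega>) \<partial>M) = (\<integral>\<^sup>+ \<omega>. hc F N T \<xi> k \<omega> \<partial>M)"
proof (rule nn_integral_cong_AE)
  from AE_space AE_good[OF pp]
  show "AE \<omega> in M. ennreal (cost F N T \<xi> \<omega>) = hc F N T \<xi> k \<omega>"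
  proof eventually_elim
    case (elim \<omega>) then show ?case using cost_hc[OF _ adm _ T] by blast
  qed
qed

lemma key_pair:
  assumes pp: "poisson_process M lam N" and T: "0 \<le> T" and sc: "strictly_convex_on {0..} F"
    and Fnn: "\<forall>x\<ge>0. 0 \<le> F x"
    and xi: "\<xi> \<in> admissible M N (Suc (Suc j))" and eta: "\<eta> \<in> admissible M N j"
  shows "value_fn M N F (Suc j) T + value_fn M N F (Suc j) T
     \<le> (\<integral>\<^sup>+ \<omega>. ennreal (cost F N T \<xi> \<omega>) \<partial>M) + (\<integral>\<^sup>+ \<omega>. ennreal (cost F N T \<eta> \<omega>) \<partial>M)"
proof -
  have a1: "comb 1 \<xi> \<eta> \<in> admissible M N (Suc j)" and a0: "comb 0 \<xi> \<eta> \<in> admissible M N (Suc j)"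
    using comb_adm[OF xi eta] by auto
  have "value_fn M N F (Suc j) T + value_fn M N F (Suc j) T
     \<le> (\<integral>\<^sup>+ \<omega>. ennreal (cost F N T (comb 1 \<xi> \<eta>) \<omega>) \<partial>M) + (\<integral>\<^sup>+ \<omega>. ennreal (cost F N T (comb 0 \<xi> \<eta>) \<omega>) \<partial>M)"
    unfolding value_fn_def by (intro add_mono INF_lower a1 a0)
  also have "\<dots> = (\<integral>\<^sup>+ \<omega>. hc F N T (comb 1 \<xi> \<eta>) (Suc j) \<omega> + hc F N T (comb 0 \<xi> \<eta>) (Suc j) \<omega> \<partial>M)"
    unfolding I_hc[OF pp a1 T] I_hc[OF pp a0 T]
    by (rule nn_integral_add[symmetric]) (intro hc_meas[OF pp _ T] a1 a0)+
  also have "\<dots> \<le> (\<integral>\<^sup>+ \<omega>. hc F N T \<xi> (Suc (Suc j)) \<omega> + hc F N T \<eta> j \<omega> \<partial>M)"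
  proof (rule nn_integral_mono_AE)
    from AE_space AE_good[OF pp]
    show "AE \<omega> in M. hc F N T (comb 1 \<xi> \<eta>) (Suc j) \<omega> + hc F N T (comb 0 \<xi> \<eta>) (Suc j) \<omega>
        \<le> hc F N T \<xi> (Suc (Suc j)) \<omega> + hc F N T \<eta> j \<omega>"
    proof eventually_elim
      case (elim \<omega>)
      have n: "0 \<le> cost F N T (comb 1 \<xi> \<eta>) \<omega>" "0 \<le> cost F N T (comb 0 \<xi> \<eta>) \<omega>"
        "0 \<le> cost F N T \<xi> \<omega>" "0 \<le> cost F N T \<eta> \<omega>"
        using cost_nonneg[OF elim(2) _ elim(1) T Fnn] a1 a0 xi eta by blast+
      have "hc F N T (comb 1 \<xi> \<eta>) (Suc j) \<omega> + hc F N T (comb 0 \<xi> \<eta>) (Suc j) \<omega>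
          = ennreal (cost F N T (comb 1 \<xi> \<eta>) \<omega> + cost F N T (comb 0 \<xi> \<eta>) \<omega>)"
        using cost_hc[OF elim(2) a1 elim(1) T] cost_hc[OF elim(2) a0 elim(1) T] n by simp
      also have "\<dots> \<le> ennreal (cost F N T \<xi> \<omega> + cost F N T \<eta> \<omega>)"
        by (rule ennreal_leI[OF comb_cost[OF elim(2) elim(1) T xi eta sc]])
      also have "\<dots> = hc F N T \<xi> (Suc (Suc j)) \<omega> + hc F N T \<eta> j \<omega>"
        using cost_hc[OF elim(2) xi elim(1) T] cost_hc[OF elim(2) eta elim(1) T] n by simp
      finally show ?case .
    qed
  qed
  also have "\<dots> = (\<integral>\<^sup>+ \<omega>. ennreal (cost F N T \<xi> \<omega>) \<partial>M) + (\<integral>\<^sup>+ \<omega>. ennreal (cost F N T \<eta> \<omega>) \<partial>M)"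
    unfolding I_hc[OF pp xi T] I_hc[OF pp eta T]
    by (rule nn_integral_add) (intro hc_meas[OF pp _ T] xi eta)+
  finally show ?thesis .
qed

lemma ennreal_lt_add_pos: "(a::ennreal) < top \<Longrightarrow> 0 < e \<Longrightarrow> a < a + ennreal e"
  by (cases a rule: ennreal_cases) (auto simp flip: ennreal_plus intro!: ennreal_lessI)

lemma midpoint:
  assumes pp: "poisson_process M lam N" and T: "0 \<le> T" and sc: "strictly_convex_on {0..} F"
    and Fnn: "\<forall>x\<ge>0. 0 \<le> F x"
  shows "value_fn M N F (Suc j) T + value_fn M N F (Suc j) T
     \<le> value_fn M N F (Suc (Suc j)) T + value_fn M N F j T"
proof (rule ennreal_le_epsilon)
  fix e :: real
  assume fin: "value_fn M N F (Suc (Suc j)) T + value_fn M N F j T < top" and e: "0 < e"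
  let ?a = "value_fn M N F (Suc (Suc j)) T" and ?b = "value_fn M N F j T"
  have fa: "?a < top" and fb: "?b < top" using fin by (auto simp: top_unique)
  have e2: "0 < e / 2" using e by simp
  have "?a < ?a + ennreal (e / 2)" by (rule ennreal_lt_add_pos[OF fa e2])
  then obtain \<xi> where xi: "\<xi> \<in> admissible M N (Suc (Suc j))"
    and xl: "(\<integral>\<^sup>+ \<omega>. ennreal (cost F N T \<xi> \<omega>) \<partial>M) < ?a + ennreal (e / 2)"
    unfolding value_fn_def[of M N F "Suc (Suc j)"] by (auto simp: INF_less_iff)
  have "?b < ?b + ennreal (e / 2)" by (rule ennreal_lt_add_pos[OF fb e2])
  then obtain \<eta> where eta: "\<eta> \<in> admissible M N j"
    and el: "(\<integral>\<^sup>+ \<omega>. ennreal (cost F N T \<eta> \<omega>) \<partial>M) < ?b + ennreal (e / 2)"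
    unfolding value_fn_def[of M N F j] by (auto simp: INF_less_iff)
  have "value_fn M N F (Suc j) T + value_fn M N F (Suc j) T
     \<le> (\<integral>\<^sup>+ \<omega>. ennreal (cost F N T \<xi> \<omega>) \<partial>M) + (\<integral>\<^sup>+ \<omega>. ennreal (cost F N T \<eta> \<omega>) \<partial>M)"
    by (rule key_pair[OF pp T sc Fnn xi eta])
  also have "\<dots> \<le> (?a + ennreal (e / 2)) + (?b + ennreal (e / 2))"
    using xl el by (intro add_mono) auto
  also have "\<dots> = ?a + ?b + ennreal e"
  proof -
    have "ennreal (e / 2) + ennreal (e / 2) = ennreal e" using e by (simp flip: ennreal_plus)
    then show ?thesis by (metis add.assoc add.commute)
  qed
  finally show "value_fn M N F (Suc j) T + value_fn M N F (Suc j) T \<le> ?a + ?b + ennreal e" .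
qed

lemma dconv:
  fixes w :: "nat \<Rightarrow> real"
  assumes h: "\<And>j. w (Suc j) + w (Suc j) \<le> w (Suc (Suc j)) + w j" and im: "i \<le> m"
  shows "w m - w i \<le> real (m - i) * (w (Suc m) - w m)"
  using im
proof (induction m rule: dec_induct)
  case base then show ?case by simp
next
  case (step m)
  have D: "w (Suc m) - w m \<le> w (Suc (Suc m)) - w (Suc m)" using h[of m] by simp
  have "w (Suc m) - w i = (w (Suc m) - w m) + (w m - w i)" by simp
  also have "\<dots> \<le> (w (Suc m) - w m) + real (m - i) * (w (Suc m) - w m)" using step.IH by simp
  also have "\<dots> = real (Suc m - i) * (w (Suc m) - w m)" using step.hyps by (simp add: Suc_diff_le algebra_simps)
  also have "\<dots> \<le> real (Suc m - i) * (w (Suc (Suc m)) - w (Suc m))" by (rule mult_left_mono[OF D]) simp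
  finally show ?case .
qed

theorem corollary2p8:
  fixes M :: "'a measure" and N :: "real \<Rightarrow> 'a \<Rightarrow> nat" and lam :: real
    and F :: "real \<Rightarrow> real" and T :: real and a k b :: nat
  assumes "poisson_process M lam N" and "0 < lam"
    and "\<forall>x\<ge>0. 0 \<le> F x"
    and "strict_mono_on {0..} F" and "strictly_convex_on {0..} F" and "F 0 = 0"
    and "0 \<le> T" and "a < k" and "0 < b" and "a < b" and "b \<le> k"
  shows "value_fn M N F (k - a - 1) T
           \<le> ennreal (1 / real (b - a)) * value_fn M N F (k - b) T
             + ennreal (1 - 1 / real (b - a)) * value_fn M N F (k - a) T"
proof -
  note pp = assms(1) and Fnn = assms(3) and sc = assms(5) and F0 = assms(6) and T = assms(7)
  define w where "w j = enn2real (value_fn M N F j T)" for j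
  have vw: "value_fn M N F j T = ennreal (w j)" for j
  proof -
    have "value_fn M N F j T \<noteq> top" using value_le[where F=F and k=j and T=T, OF pp F0] by (auto simp: top_unique)
    then show ?thesis unfolding w_def by (simp add: ennreal_enn2real_if)
  qed
  have wn: "0 \<le> w j" for j unfolding w_def by simp
  have h: "w (Suc j) + w (Suc j) \<le> w (Suc (Suc j)) + w j" for j
  proof -
    have e1: "ennreal (w (Suc j) + w (Suc j)) = ennreal (w (Suc j)) + ennreal (w (Suc j))"
      using wn by (intro ennreal_plus)
    have e2: "ennreal (w (Suc (Suc j)) + w j) = ennreal (w (Suc (Suc j))) + ennreal (w j)"
      using wn by (intro ennreal_plus)
    have "ennreal (w (Suc j) + w (Suc j)) \<le> ennreal (w (Suc (Suc j)) + w j)"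
      unfolding e1 e2 using midpoint[OF pp T sc Fnn, of j] unfolding vw .
    moreover have nn: "0 \<le> w (Suc (Suc j)) + w j" using wn[of "Suc (Suc j)"] wn[of j] by linarith
    ultimately show ?thesis using ennreal_le_iff[OF nn] by blast
  qed
  define d where "d = b - a"
  have d1: "1 \<le> d" using assms by (simp add: d_def)
  have im: "k - b \<le> k - a - 1" and dm: "k - a - 1 - (k - b) = d - 1" and sm: "Suc (k - a - 1) = k - a"
    using assms by (auto simp: d_def)
  have c: "w (k - a - 1) - w (k - b) \<le> real (d - 1) * (w (k - a) - w (k - a - 1))"
    using dconv[where w=w, OF h im] unfolding dm sm .
  have rd: "real (d - 1) = real d - 1" using d1 by simp
  have "real d * w (k - a - 1) \<le> w (k - b) + (real d - 1) * w (k - a)"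
    using c unfolding rd by (simp add: algebra_simps)
  then have main: "w (k - a - 1) \<le> 1 / real d * w (k - b) + (1 - 1 / real d) * w (k - a)"
    using d1 by (simp add: field_simps)
  have p1: "0 \<le> 1 / real d" "0 \<le> 1 - 1 / real d" using d1 by auto
  have "ennreal (1 / real (b - a)) * value_fn M N F (k - b) T
             + ennreal (1 - 1 / real (b - a)) * value_fn M N F (k - a) T
      = ennreal (1 / real d * w (k - b) + (1 - 1 / real d) * w (k - a))"
  proof -
    have "ennreal (1 / real d * w (k - b) + (1 - 1 / real d) * w (k - a))
        = ennreal (1 / real d * w (k - b)) + ennreal ((1 - 1 / real d) * w (k - a))"
      by (rule ennreal_plus[OF mult_nonneg_nonneg[OF p1(1) wn] mult_nonneg_nonneg[OF p1(2) wn]])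
    also have "\<dots> = ennreal (1 / real d) * ennreal (w (k - b)) + ennreal (1 - 1 / real d) * ennreal (w (k - a))"
      by (simp only: ennreal_mult[OF p1(1) wn] ennreal_mult[OF p1(2) wn])
    finally show ?thesis unfolding vw d_def by simp
  qed
  then show ?thesis unfolding vw using main by (simp add: ennreal_leI)
qed

end
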